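(* Let $\mathbb K$ be a commutative semiring with $0\ne1$ and let $S:\mathrm{TXT}(\Delta)\to K$ be a regular alternating text series. Then $\pi(S):\Delta^*\to K$ is an algebraic formal power series.
   Context: Texts: a text over a finite alphabet $\Delta$ is $(V,\lambda,\le_1,\le_2)$ with $V$ finite nonempty, $\lambda:V\to\Delta$, $\le_1,\le_2$ linear orders on $V$, up to isomorphism. $\tau\circ\tau'$ (resp. $\tau\bullet\tau'$): disjoint union, all of $\tau$ before all of $\tau'$ in $\le_1$, and in $\le_2$ all of $\tau$ before $\tau'$ (resp. all of $\tau'$ before $\tau$). $\mathrm{TXT}(\Delta)$ (alternating texts) is the set of texts generated from singleton texts by $\circ,\bullet$. Projection: $\pi(\tau)$ is the word of labels read along $\le_1$, and $\pi(S)(w)=\sum_{\tau\in\mathrm{TXT}(\Delta),\pi(\tau)=w}S(\tau)$ (so $0$ at $\varepsilon$). WPA: $\mathcal A=(H,V,\Omega,\mu,\mu_{op},\mu_{cl},\lambda,\gamma)$, $H,V$ disjoint finite sets, $\Omega$ finite, $\mu:(H\times\Delta\times H)\cup(V\times\Delta\times V)\to K$, $\mu_{op},\mu_{cl}:(H\times\Omega\times V)\cup(V\times\Omega\times H)\to K$, $\lambda,\gamma:H\cup V\to K$. Runs (with label, weight, initial/final state): (1) for $(q_1,q_2)\in(H\times H)\cup(V\times V)$, $a\in\Delta$, $(q_1,a,q_2)$ is a run from $q_1$ to $q_2$ with label $a$ and weight $\mu(q_1,a,q_2)$; (2) if runs $r_1,r_2$ satisfy final$(r_1)=$ initial$(r_2)=q$,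 then $r_1r_2$ is a run from initial$(r_1)$ to final$(r_2)$ with weight the product and label $\mathrm{lab}(r_1)\circ\mathrm{lab}(r_2)$ if $q\in H$, $\mathrm{lab}(r_1)\bullet\mathrm{lab}(r_2)$ if $q\in V$; (3) if $r$ is a run obtained by rule (2), from $p_1$ to $p_2$, with $p_1\in H$ (resp. $V$) and $q_1,q_2\in V$ (resp. $H$), $s\in\Omega$, then $(q_1,(_s,p_1)\,r\,(p_2,)_s,q_2)$ is a run from $q_1$ to $q_2$ with label $\mathrm{lab}(r)$ and weight $\mu_{op}(q_1,s,p_1)\mathrm{wt}(r)\mu_{cl}(p_2,s,q_2)$. $\|\mathcal A\|(\tau)=\sum_{q_1,q_2}\lambda(q_1)\sum_r\mathrm{wt}(r)\gamma(q_2)$ over runs from $q_1$ to $q_2$ labeled $\tau$. A series $\mathrm{TXT}(\Delta)\to K$ is regular if it is some $\|\mathcal A\|$. Algebraic series: formal power series are maps $\Delta^*\to K$ with pointwise sum/scalar product and Cauchy product $(S_1S_2)(w)=\sum_{w=w_1w_2}S_1(w_1)S_2(w_2)$; words identified with characteristic series. For a finite variable set $\mathcal X$ disjoint from $\Delta$, a polynomial is a finitely supported map $(\Delta\cup\mathcal X)^*\to K$; an algebraic system is $(P_X)_{X\in\mathcal X}$; a solution is $(S_X)$ with $S_X=\sum(P_X,u_1X_1\cdots u_kX_ku_{k+1})u_1S_{X_1}\cdots u_kS_{X_k}u_{k+1}$ over the support of $P_X$. Proper: $P_X(Y)=P_X(\varepsilon)=0$ for all $X,Y$; quasiregular: $S(\varepsilon)=0$.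 A proper system has exactly one quasiregular solution; algebraic series are its components for some proper system. *)

theory Defs
  imports Main
begin

text \<open>A text (V, lab, le1, le2) is represented canonically up to isomorphism:
  V = {0..<n} ordered by le1 as the natural order, so the text is the pair (w, p)
  where w is the word of labels read along le1 and p is the list of positions
  enumerated in le2-order (a permutation of [0..<n]).\<close>

type_synonym 'd atext = "'d list \<times> nat list"

definition is_text :: "'d atext \<Rightarrow> bool" where
  "is_text t \<longleftrightarrow> fst t \<noteq> [] \<and> distinct (snd t) \<and> set (snd t) = {0..<length (fst t)}"

definition singleton_text :: "'d \<Rightarrow> 'd atext" where
  "singleton_text a = ([a], [0])"

text \<open>horizontal product (circ): t before u in both orders\<close>
definition tcomp :: "'d atext \<Rightarrow> 'd atext \<Rightarrow> 'd atext" where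
  "tcomp t u = (fst t @ fst u, snd t @ map (\<lambda>i. i + length (fst t)) (snd u))"

text \<open>vertical product (bullet): t before u in le1, u before t in le2\<close>
definition tbullet :: "'d atext \<Rightarrow> 'd atext \<Rightarrow> 'd atext" where
  "tbullet t u = (fst t @ fst u, map (\<lambda>i. i + length (fst t)) (snd u) @ snd t)"

inductive_set TXT :: "'d atext set" where
  sing: "singleton_text a \<in> TXT"
| comp: "t \<in> TXT \<Longrightarrow> u \<in> TXT \<Longrightarrow> tcomp t u \<in> TXT"
| bull: "t \<in> TXT \<Longrightarrow> u \<in> TXT \<Longrightarrow> tbullet t u \<in> TXT"

definition proj :: "('d atext \<Rightarrow> 'k::comm_monoid_add) \<Rightarrow> 'd list \<Rightarrow> 'k" where
  "proj S w = (\<Sum>t\<in>{t \<in> TXT. fst t = w}. S t)"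

text \<open>States and parenthesis symbols are natural numbers (w.l.o.g.: any finite set
  of states embeds in nat). A run is a string; we encode it as a list of tokens:
  an atomic run (q1,a,q2) is the token Atom q1 a q2; the opening part
  "(q1,(_s,p1)" of rule (3) is the token Opn q1 s p1 and the closing part
  "(p2,)_s,q2)" is Cls p2 s q2.\<close>

datatype 'd tok = Atom nat 'd nat | Opn nat nat nat | Cls nat nat nat

text \<open>is_run H V Om r q1 q2 l b: the string r is a run from q1 to q2 with label l;
  b records whether this derivation ends with rule (2).\<close>
inductive is_run :: "nat set \<Rightarrow> nat set \<Rightarrow> nat set \<Rightarrow> 'd tok list \<Rightarrow> nat \<Rightarrow> nat
    \<Rightarrow> 'd atext \<Rightarrow> bool \<Rightarrow> bool" for H V Om where
  atom: "(q1 \<in> H \<and> q2 \<in> H) \<or> (q1 \<in> V \<and> q2 \<in> V) \<Longrightarrow>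
     is_run H V Om [Atom q1 a q2] q1 q2 (singleton_text a) False"
| concH: "is_run H V Om r1 q1 q l1 b1 \<Longrightarrow> is_run H V Om r2 q q2 l2 b2 \<Longrightarrow> q \<in> H \<Longrightarrow>
     is_run H V Om (r1 @ r2) q1 q2 (tcomp l1 l2) True"
| concV: "is_run H V Om r1 q1 q l1 b1 \<Longrightarrow> is_run H V Om r2 q q2 l2 b2 \<Longrightarrow> q \<in> V \<Longrightarrow>
     is_run H V Om (r1 @ r2) q1 q2 (tbullet l1 l2) True"
| paren: "is_run H V Om r p1 p2 l True \<Longrightarrow> s \<in> Om \<Longrightarrow>
     (p1 \<in> H \<and> q1 \<in> V \<and> q2 \<in> V) \<or> (p1 \<in> V \<and> q1 \<in> H \<and> q2 \<in> H) \<Longrightarrow>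
     is_run H V Om ([Opn q1 s p1] @ r @ [Cls p2 s q2]) q1 q2 l False"

fun tok_weight :: "(nat \<Rightarrow> 'd \<Rightarrow> nat \<Rightarrow> 'k) \<Rightarrow> (nat \<Rightarrow> nat \<Rightarrow> nat \<Rightarrow> 'k)
    \<Rightarrow> (nat \<Rightarrow> nat \<Rightarrow> nat \<Rightarrow> 'k) \<Rightarrow> 'd tok \<Rightarrow> 'k" where
  "tok_weight mu mop mcl (Atom p a q) = mu p a q"
| "tok_weight mu mop mcl (Opn q s p) = mop q s p"
| "tok_weight mu mop mcl (Cls p s q) = mcl p s q"

definition run_weight :: "(nat \<Rightarrow> 'd \<Rightarrow> nat \<Rightarrow> 'k::monoid_mult) \<Rightarrow> (nat \<Rightarrow> nat \<Rightarrow> nat \<Rightarrow> 'k)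
    \<Rightarrow> (nat \<Rightarrow> nat \<Rightarrow> nat \<Rightarrow> 'k) \<Rightarrow> 'd tok list \<Rightarrow> 'k" where
  "run_weight mu mop mcl r = prod_list (map (tok_weight mu mop mcl) r)"

definition wpa_behaviour :: "nat set \<Rightarrow> nat set \<Rightarrow> nat set \<Rightarrow> (nat \<Rightarrow> 'd \<Rightarrow> nat \<Rightarrow> 'k::comm_semiring_1)
    \<Rightarrow> (nat \<Rightarrow> nat \<Rightarrow> nat \<Rightarrow> 'k) \<Rightarrow> (nat \<Rightarrow> nat \<Rightarrow> nat \<Rightarrow> 'k) \<Rightarrow> (nat \<Rightarrow> 'k) \<Rightarrow> (nat \<Rightarrow> 'k)
    \<Rightarrow> 'd atext \<Rightarrow> 'k" where
  "wpa_behaviour H V Om mu mop mcl lam gam t =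
     (\<Sum>q1\<in>H \<union> V. \<Sum>q2\<in>H \<union> V.
        lam q1 * (\<Sum>r\<in>{r. \<exists>b. is_run H V Om r q1 q2 t b}. run_weight mu mop mcl r) * gam q2)"

definition regular_text_series :: "('d atext \<Rightarrow> 'k::comm_semiring_1) \<Rightarrow> bool" where
  "regular_text_series S \<longleftrightarrow>
     (\<exists>H V Om mu mop mcl lam gam. finite H \<and> finite V \<and> H \<inter> V = {} \<and> finite Om \<and>
        (\<forall>t\<in>TXT. S t = wpa_behaviour H V Om mu mop mcl lam gam t))"

type_synonym ('d,'k) fpser = "'d list \<Rightarrow> 'k"

definition char_ser :: "'d list \<Rightarrow> ('d,'k::zero_neq_one) fpser" where
  "char_ser u = (\<lambda>w. if w = u then 1 else 0)"

definition cauchy :: "('d,'k::comm_semiring_1) fpser \<Rightarrow> ('d,'k) fpser \<Rightarrow> ('d,'k) fpser" where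
  "cauchy S1 S2 = (\<lambda>w. \<Sum>i\<le>length w. S1 (take i w) * S2 (drop i w))"

text \<open>Variables are natural numbers; words over the alphabet together with the
  variables are lists over 'd + nat (Inl: letter, Inr: variable).\<close>

primrec subst_word :: "(nat \<Rightarrow> ('d,'k::comm_semiring_1) fpser) \<Rightarrow> ('d + nat) list \<Rightarrow> ('d,'k) fpser" where
  "subst_word Sol [] = char_ser []"
| "subst_word Sol (x # m) =
     cauchy (case x of Inl a \<Rightarrow> char_ser [a] | Inr X \<Rightarrow> Sol X) (subst_word Sol m)"

definition poly_support :: "(('d + nat) list \<Rightarrow> 'k::zero) \<Rightarrow> ('d + nat) list set" where
  "poly_support P = {m. P m \<noteq> 0}"

definition alg_system :: "nat set \<Rightarrow> (nat \<Rightarrow> ('d + nat) list \<Rightarrow> 'k::zero) \<Rightarrow> bool" where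
  "alg_system Xs P \<longleftrightarrow> finite Xs \<and>
     (\<forall>X\<in>Xs. finite (poly_support (P X)) \<and>
        (\<forall>m\<in>poly_support (P X). \<forall>Y. Inr Y \<in> set m \<longrightarrow> Y \<in> Xs))"

definition proper_system :: "nat set \<Rightarrow> (nat \<Rightarrow> ('d + nat) list \<Rightarrow> 'k::zero) \<Rightarrow> bool" where
  "proper_system Xs P \<longleftrightarrow> (\<forall>X\<in>Xs. P X [] = 0 \<and> (\<forall>Y\<in>Xs. P X [Inr Y] = 0))"

definition is_solution :: "nat set \<Rightarrow> (nat \<Rightarrow> ('d + nat) list \<Rightarrow> 'k::comm_semiring_1)
    \<Rightarrow> (nat \<Rightarrow> ('d,'k) fpser) \<Rightarrow> bool" where
  "is_solution Xs P Sol \<longleftrightarrow>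
     (\<forall>X\<in>Xs. \<forall>w. Sol X w = (\<Sum>m\<in>poly_support (P X). P X m * subst_word Sol m w))"

definition quasiregular :: "('d,'k::zero) fpser \<Rightarrow> bool" where
  "quasiregular S \<longleftrightarrow> S [] = 0"

definition algebraic_series :: "('d,'k::comm_semiring_1) fpser \<Rightarrow> bool" where
  "algebraic_series S \<longleftrightarrow>
     (\<exists>Xs P Sol X0. alg_system Xs P \<and> proper_system Xs P \<and> is_solution Xs P Sol \<and>
        (\<forall>X\<in>Xs. quasiregular (Sol X)) \<and> X0 \<in> Xs \<and> Sol X0 = S)"

end

theory Submission
  imports Defs "HOL-Library.Nat_Bijection"
begin



definition good :: "'d atext \<Rightarrow> bool" where
  "good t \<longleftrightarrow> set (snd t) \<subseteq> {0..<length (fst t)} \<and> length (snd t) = length (fst t) \<and> fst t \<noteq> []"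

lemma good_sing: "good (singleton_text a)" by (simp add: good_def singleton_text_def)
lemma good_tcomp: "good t \<Longrightarrow> good u \<Longrightarrow> good (tcomp t u)"
  by (auto simp: good_def tcomp_def)
lemma good_tbullet: "good t \<Longrightarrow> good u \<Longrightarrow> good (tbullet t u)"
  by (auto simp: good_def tbullet_def)
lemma TXT_good: "t \<in> TXT \<Longrightarrow> good t"
  by (induction rule: TXT.induct) (auto intro: good_sing good_tcomp good_tbullet)

lemma tcomp_assoc: "tcomp (tcomp a b) c = tcomp a (tcomp b c)"
  by (simp add: tcomp_def)
lemma tbullet_assoc: "tbullet (tbullet a b) c = tbullet a (tbullet b c)"
  by (simp add: tbullet_def)

fun tok_end :: "'d tok \<Rightarrow> nat" where
  "tok_end (Atom p a q) = q" | "tok_end (Opn q s p) = p" | "tok_end (Cls p s q) = q"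

fun tok_let :: "'d tok \<Rightarrow> 'd list" where
  "tok_let (Atom p a q) = [a]" | "tok_let (Opn q s p) = []" | "tok_let (Cls p s q) = []"

fun tb :: "'d tok \<Rightarrow> int" where
  "tb (Atom p a q) = 0" | "tb (Opn q s p) = 1" | "tb (Cls p s q) = -1"

definition bal :: "'d tok list \<Rightarrow> int" where "bal r = sum_list (map tb r)"

definition toks :: "nat set \<Rightarrow> nat set \<Rightarrow> 'd tok set" where
  "toks Q Om = {x. case x of Atom p a q \<Rightarrow> p \<in> Q \<and> q \<in> Q | Opn p a q \<Rightarrow> p \<in> Q \<and> a \<in> Om \<and> q \<in> Q
     | Cls p a q \<Rightarrow> p \<in> Q \<and> a \<in> Om \<and> q \<in> Q}"

lemma finite_toks: assumes "finite Q" "finite Om" shows "finite (toks Q Om :: 'd::finite tok set)"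
proof -
  have "toks Q Om \<subseteq> (\<lambda>(p,a,q). Atom p a q) ` (Q \<times> UNIV \<times> Q) \<union> (\<lambda>(p,a,q). Opn p a q) ` (Q \<times> Om \<times> Q)
     \<union> (\<lambda>(p,a,q). Cls p a q) ` (Q \<times> Om \<times> Q)"
  proof
    fix x assume "x \<in> toks Q Om" then show "x \<in> (\<lambda>(p,a,q). Atom p a q) ` (Q \<times> UNIV \<times> Q) \<union> (\<lambda>(p,a,q). Opn p a q) ` (Q \<times> Om \<times> Q)
     \<union> (\<lambda>(p,a,q). Cls p a q) ` (Q \<times> Om \<times> Q)"
      by (cases x) (auto simp: toks_def image_iff)
  qed
  moreover have "finite ((\<lambda>(p,a,q). Atom p a q) ` (Q \<times> (UNIV::'d set) \<times> Q) \<union> (\<lambda>(p,a,q). Opn p a q) ` (Q \<times> Om \<times> Q)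
     \<union> (\<lambda>(p,a,q). Cls p a q) ` (Q \<times> Om \<times> Q))" using assms by simp
  ultimately show ?thesis by (rule finite_subset)
qed

lemma run_basic:
  assumes "is_run H V Om r q1 q2 t b" "H \<inter> V = {}"
  shows "r \<noteq> [] \<and> fst t = concat (map tok_let r) \<and> good t \<and> t \<in> TXT \<and>
     q1 \<in> H \<union> V \<and> q2 \<in> H \<union> V \<and> (q1 \<in> H \<longleftrightarrow> q2 \<in> H) \<and> tok_end (last r) = q2 \<and>
     set r \<subseteq> toks (H \<union> V) Om \<and> length r + (if b then 4 else 2) \<le> 3 * length (fst t)"
  using assms
proof (induction rule: is_run.induct)
  case (atom q1 q2 a)
  then show ?case by (auto simp: singleton_text_def good_def toks_def intro: TXT.sing[unfolded singleton_text_def])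
next
  case (concH r1 q1 q l1 b1 r2 q2 l2 b2)
  have "good (tcomp l1 l2)" "tcomp l1 l2 \<in> TXT" using concH by (auto intro: good_tcomp TXT.comp)
  then show ?case using concH by (auto simp: tcomp_def split: if_splits)
next
  case (concV r1 q1 q l1 b1 r2 q2 l2 b2)
  have "good (tbullet l1 l2)" "tbullet l1 l2 \<in> TXT" using concV by (auto intro: good_tbullet TXT.bull)
  then show ?case using concV by (auto simp: tbullet_def split: if_splits)
next
  case (paren r p1 p2 l s q1 q2)
  have "Opn q1 s p1 \<in> toks (H \<union> V) Om" "Cls p2 s q2 \<in> toks (H \<union> V) Om"
    using paren by (auto simp: toks_def)
  then show ?case using paren by auto
qed




lemma bal_append[simp]: "bal (a @ b) = bal a + bal b" by (simp add: bal_def)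
lemma bal_Cons[simp]: "bal (x # b) = tb x + bal b" by (simp add: bal_def)
lemma bal_Nil[simp]: "bal [] = 0" by (simp add: bal_def)

lemma run_bal:
  assumes "is_run H V Om r q1 q2 t b"
  shows "bal r = 0 \<and> (\<forall>k. 0 \<le> bal (take k r)) \<and>
     (\<not> b \<longrightarrow> length r = 1 \<or> (\<forall>k. 0 < k \<and> k < length r \<longrightarrow> 1 \<le> bal (take k r)))"
  using assms
proof (induction rule: is_run.induct)
  case (atom q1 q2 a)
  then show ?case by (auto simp: take_Cons')
next
  case (concH r1 q1 q l1 b1 r2 q2 l2 b2)
  have "0 \<le> bal (take k (r1 @ r2))" for k
    using concH.IH by (simp add: take_append)
  then show ?case using concH.IH by simp
next
  case (concV r1 q1 q l1 b1 r2 q2 l2 b2)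
  have "0 \<le> bal (take k (r1 @ r2))" for k
    using concV.IH by (simp add: take_append)
  then show ?case using concV.IH by simp
next
  case (paren r p1 p2 l s q1 q2)
  have A: "1 \<le> bal (take k ([Opn q1 s p1] @ r @ [Cls p2 s q2]))"
    if "0 < k" "k < length ([Opn q1 s p1] @ r @ [Cls p2 s q2])" for k
  proof -
    obtain j where j: "k = Suc j" using \<open>0 < k\<close> by (cases k) auto
    have "j \<le> length r" using that j by simp
    then have "take k ([Opn q1 s p1] @ r @ [Cls p2 s q2]) = Opn q1 s p1 # take j r" using j by simp
    then show ?thesis using paren by simp
  qed
  have B: "0 \<le> bal (take k ([Opn q1 s p1] @ r @ [Cls p2 s q2]))" for k
  proof (cases "k = 0")
    case True then show ?thesis by simp
  next
    case False
    show ?thesis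
    proof (cases "k < length ([Opn q1 s p1] @ r @ [Cls p2 s q2])")
      case True
      have "1 \<le> bal (take k ([Opn q1 s p1] @ r @ [Cls p2 s q2]))" using A[of k] True \<open>k \<noteq> 0\<close> by blast
      then show ?thesis by simp
    next
      case False then show ?thesis using paren by simp
    qed
  qed
  show ?case using A B paren by simp
qed

lemma run_False_cases:
  assumes "is_run H V Om r q1 q2 t False"
  shows "(\<exists>a. r = [Atom q1 a q2] \<and> t = singleton_text a \<and> ((q1 \<in> H \<and> q2 \<in> H) \<or> (q1 \<in> V \<and> q2 \<in> V))) \<or>
    (\<exists>s p1 p2 m. r = [Opn q1 s p1] @ m @ [Cls p2 s q2] \<and> is_run H V Om m p1 p2 t True \<and> s \<in> Om \<and>
        ((p1 \<in> H \<and> q1 \<in> V \<and> q2 \<in> V) \<or> (p1 \<in> V \<and> q1 \<in> H \<and> q2 \<in> H)))"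
  using assms by (cases rule: is_run.cases) auto

lemma run_False_prefix:
  assumes "is_run H V Om r q1 q2 t False" "k < length r" "0 < k" "bal (take k r) = 0"
  shows False
proof -
  from run_bal[OF assms(1)] have "length r = 1 \<or> (\<forall>k. 0 < k \<and> k < length r \<longrightarrow> 1 \<le> bal (take k r))" by simp
  then show False using assms by auto
qed

lemma run_nonempty: "is_run H V Om r q1 q2 t b \<Longrightarrow> r \<noteq> []"
  by (induction rule: is_run.induct) auto

lemma run_disj:
  assumes "is_run H V Om r q1 q2 t False" "is_run H V Om r q1' q2' t' True"
  shows False
  using assms(2,1)
proof (cases rule: is_run.cases)
  case (concH r1 q l1 b1 r2 l2 b2)
  have "r1 \<noteq> []" "r2 \<noteq> []" using run_nonempty concH by blast+
  moreover have "bal r1 = 0" using run_bal concH by blast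
  ultimately show False using run_False_prefix[OF assms(1), of "length r1"] concH by simp
next
  case (concV r1 q l1 b1 r2 l2 b2)
  have "r1 \<noteq> []" "r2 \<noteq> []" using run_nonempty concV by blast+
  moreover have "bal r1 = 0" using run_bal concV by blast
  ultimately show False using run_False_prefix[OF assms(1), of "length r1"] concV by simp
qed simp_all

lemma run_prefix_uniq_aux:
  assumes "r1 @ r2 = r1' @ r2'" "is_run H V Om r1 q1 q2 t False" "is_run H V Om r1' q1' q2' t' False"
    "length r1 \<le> length r1'"
  shows "r1 = r1'"
proof (rule ccontr)
  assume ne: "r1 \<noteq> r1'"
  have "take (length r1) (r1 @ r2) = take (length r1) (r1' @ r2')" using assms(1) by simp
  then have tk: "take (length r1) r1' = r1" using assms(4) by simp
  have "length r1 \<noteq> length r1'" using tk ne by auto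
  then have "length r1 < length r1'" using assms(4) by simp
  moreover have "0 < length r1" using run_nonempty assms(2) by blast
  moreover have "bal r1 = 0" using run_bal assms(2) by blast
  ultimately show False using run_False_prefix[OF assms(3), of "length r1"] tk by simp
qed

lemma run_prefix_uniq:
  assumes "r1 @ r2 = r1' @ r2'" "is_run H V Om r1 q1 q2 t False" "is_run H V Om r1' q1' q2' t' False"
  shows "r1 = r1'"
  using run_prefix_uniq_aux[OF assms] run_prefix_uniq_aux[OF assms(1)[symmetric] assms(3,2)]
  by (cases "length r1 \<le> length r1'") auto

lemma run_True_decomp:
  assumes "is_run H V Om r q1 q2 t b" "b" "H \<inter> V = {}"
  shows "\<exists>q r1 t1 r2 t2 b2. r = r1 @ r2 \<and> is_run H V Om r1 q1 q t1 False \<and> is_run H V Om r2 q q2 t2 b2 \<and>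
     (q \<in> H \<and> t = tcomp t1 t2 \<or> q \<in> V \<and> t = tbullet t1 t2)"
  using assms
proof (induction rule: is_run.induct)
  case (concH r1 q1 q l1 b1 r2 q2 l2 b2)
  note disj = \<open>H \<inter> V = {}\<close>
  show ?case
  proof (cases b1)
    case False
    then have "r1 @ r2 = r1 @ r2 \<and> is_run H V Om r1 q1 q l1 False \<and> is_run H V Om r2 q q2 l2 b2 \<and>
     (q \<in> H \<and> tcomp l1 l2 = tcomp l1 l2)" using concH.hyps by simp
    then show ?thesis by blast
  next
    case True
    from concH.IH(1)[OF True disj] obtain q' u1 s1 u2 s2 c2 where d: "r1 = u1 @ u2" "is_run H V Om u1 q1 q' s1 False"
      "is_run H V Om u2 q' q s2 c2" "q' \<in> H \<and> l1 = tcomp s1 s2 \<or> q' \<in> V \<and> l1 = tbullet s1 s2"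
      by blast
    have "q' \<in> H" using run_basic[OF d(3) disj] concH.hyps(3) by blast
    then have "l1 = tcomp s1 s2" using d(4) disj by blast
    moreover have "is_run H V Om (u2 @ r2) q' q2 (tcomp s2 l2) True"
      using is_run.concH[OF d(3) concH.hyps(2) concH.hyps(3)] .
    ultimately have "r1 @ r2 = u1 @ (u2 @ r2) \<and> is_run H V Om u1 q1 q' s1 False \<and> is_run H V Om (u2 @ r2) q' q2 (tcomp s2 l2) True \<and>
     (q' \<in> H \<and> tcomp l1 l2 = tcomp s1 (tcomp s2 l2))" using d \<open>q' \<in> H\<close> by (simp add: tcomp_assoc)
    then show ?thesis by blast
  qed
next
  case (concV r1 q1 q l1 b1 r2 q2 l2 b2)
  note disj = \<open>H \<inter> V = {}\<close>
  show ?case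
  proof (cases b1)
    case False
    then have "r1 @ r2 = r1 @ r2 \<and> is_run H V Om r1 q1 q l1 False \<and> is_run H V Om r2 q q2 l2 b2 \<and>
     (q \<in> V \<and> tbullet l1 l2 = tbullet l1 l2)" using concV.hyps by simp
    then show ?thesis by blast
  next
    case True
    from concV.IH(1)[OF True disj] obtain q' u1 s1 u2 s2 c2 where d: "r1 = u1 @ u2" "is_run H V Om u1 q1 q' s1 False"
      "is_run H V Om u2 q' q s2 c2" "q' \<in> H \<and> l1 = tcomp s1 s2 \<or> q' \<in> V \<and> l1 = tbullet s1 s2"
      by blast
    have "q' \<in> V" "q' \<notin> H" using run_basic[OF d(3) disj] concV.hyps(3) disj by blast+
    then have "l1 = tbullet s1 s2" using d(4) by blast
    moreover have "is_run H V Om (u2 @ r2) q' q2 (tbullet s2 l2) True"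
      using is_run.concV[OF d(3) concV.hyps(2) concV.hyps(3)] .
    ultimately have "r1 @ r2 = u1 @ (u2 @ r2) \<and> is_run H V Om u1 q1 q' s1 False \<and> is_run H V Om (u2 @ r2) q' q2 (tbullet s2 l2) True \<and>
     (q' \<in> V \<and> tbullet l1 l2 = tbullet s1 (tbullet s2 l2))" using d \<open>q' \<in> V\<close> by (simp add: tbullet_assoc)
    then show ?thesis by blast
  qed
qed simp_all




locale wpa =
  fixes H V Om :: "nat set"
    and mu :: "nat \<Rightarrow> 'd::finite \<Rightarrow> nat \<Rightarrow> 'k::comm_semiring_1"
    and mop mcl :: "nat \<Rightarrow> nat \<Rightarrow> nat \<Rightarrow> 'k"
  assumes finH: "finite H" and finV: "finite V" and finOm: "finite Om" and disj: "H \<inter> V = {}"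
begin

abbreviation "Q \<equiv> H \<union> V"

definition PR :: "bool set \<Rightarrow> nat \<Rightarrow> nat \<Rightarrow> 'd list \<Rightarrow> ('d tok list \<times> 'd atext) set" where
  "PR B q1 q2 w = {(r,t). \<exists>b\<in>B. is_run H V Om r q1 q2 t b \<and> fst t = w}"

definition SS :: "bool set \<Rightarrow> nat \<Rightarrow> nat \<Rightarrow> 'd list \<Rightarrow> 'k" where
  "SS B q1 q2 w = (\<Sum>p\<in>PR B q1 q2 w. run_weight mu mop mcl (fst p))"

lemma finQ: "finite Q" using finH finV by simp

lemma finite_PR: "finite (PR B q1 q2 w)"
proof -
  have "PR B q1 q2 w \<subseteq> {r. set r \<subseteq> toks Q Om \<and> length r \<le> 3 * length w} \<times>
      ({w} \<times> {p. set p \<subseteq> {0..<length w} \<and> length p \<le> length w})"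
  proof
    fix x assume "x \<in> PR B q1 q2 w"
    then obtain r t b where x: "x = (r,t)" "is_run H V Om r q1 q2 t b" "fst t = w"
      unfolding PR_def by blast
    from run_basic[OF x(2) disj] x(3) show "x \<in> {r. set r \<subseteq> toks Q Om \<and> length r \<le> 3 * length w} \<times>
      ({w} \<times> {p. set p \<subseteq> {0..<length w} \<and> length p \<le> length w})"
      using x(1) by (cases t) (auto simp: good_def split: if_splits)
  qed
  moreover have "finite ({r::'d tok list. set r \<subseteq> toks Q Om \<and> length r \<le> 3 * length w} \<times>
      ({w} \<times> {p. set p \<subseteq> {0..<length w} \<and> length p \<le> length w}))"
    by (intro finite_cartesian_product finite_lists_length_le finite_toks finQ finOm) auto
  ultimately show ?thesis by (rule finite_subset)
qed

lemma PR_nil: "PR B q1 q2 [] = {}"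
proof -
  have False if "is_run H V Om r q1 q2 t b" "fst t = []" for r t b
    using run_basic[OF that(1) disj] that(2) by (simp add: good_def)
  then show ?thesis unfolding PR_def by blast
qed

lemma SS_nil: "SS B q1 q2 [] = 0"
  by (simp add: SS_def PR_nil)

lemma SS_union: "SS {False} q1 q2 w + SS {True} q1 q2 w = SS UNIV q1 q2 w"
proof -
  have "PR UNIV q1 q2 w = PR {False} q1 q2 w \<union> PR {True} q1 q2 w"
    unfolding PR_def by (auto intro: bexI[of _ False] bexI[of _ True]) (metis (full_types))
  moreover have "PR {False} q1 q2 w \<inter> PR {True} q1 q2 w = {}"
    unfolding PR_def using run_disj by blast
  ultimately show ?thesis unfolding SS_def
    by (simp add: sum.union_disjoint finite_PR)
qed

end



lemma tcomp_inj:
  assumes "tcomp a b = tcomp a' b'" "length (fst a) = length (fst a')"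
    "length (snd a) = length (fst a)" "length (snd a') = length (fst a')"
  shows "a = a' \<and> b = b'"
proof -
  have f: "fst a = fst a' \<and> fst b = fst b'" using assms(1,2) by (simp add: tcomp_def)
  have "snd a = snd a' \<and> map (\<lambda>i. i + length (fst a)) (snd b) = map (\<lambda>i. i + length (fst a)) (snd b')"
    using assms by (simp add: tcomp_def)
  moreover have "inj (\<lambda>i::nat. i + length (fst a))" by (simp add: inj_def)
  ultimately have "snd a = snd a' \<and> snd b = snd b'" by (simp add: inj_map_eq_map)
  with f show ?thesis by (simp add: prod_eq_iff)
qed

lemma tbullet_inj:
  assumes "tbullet a b = tbullet a' b'" "length (fst a) = length (fst a')"
    "length (snd b) = length (fst b)" "length (snd b') = length (fst b')"
  shows "a = a' \<and> b = b'"
proof -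
  have f: "fst a = fst a' \<and> fst b = fst b'" using assms(1,2) by (simp add: tbullet_def)
  have "length (snd b) = length (snd b')" using f assms by simp
  then have "snd a = snd a' \<and> map (\<lambda>i. i + length (fst a)) (snd b) = map (\<lambda>i. i + length (fst a)) (snd b')"
    using assms by (simp add: tbullet_def)
  moreover have "inj (\<lambda>i::nat. i + length (fst a))" by (simp add: inj_def)
  ultimately have "snd a = snd a' \<and> snd b = snd b'" by (simp add: inj_map_eq_map)
  with f show ?thesis by (simp add: prod_eq_iff)
qed

lemma run_weight_append: "run_weight mu mop mcl (r1 @ r2) = run_weight mu mop mcl r1 * run_weight mu mop mcl r2"
  by (simp add: run_weight_def)

context wpa begin

lemma PR_mem: "(r,t) \<in> PR B q1 q2 w \<longleftrightarrow> (\<exists>b\<in>B. is_run H V Om r q1 q2 t b \<and> fst t = w)"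
  by (simp add: PR_def)

definition opq :: "nat \<Rightarrow> 'd atext \<Rightarrow> 'd atext \<Rightarrow> 'd atext" where
  "opq q = (if q \<in> H then tcomp else tbullet)"

lemma E_C: "SS {True} q1 q2 w = (\<Sum>q\<in>Q. \<Sum>i\<le>length w. SS {False} q1 q (take i w) * SS UNIV q q2 (drop i w))"
proof -
  let ?f = "\<lambda>p. run_weight mu mop mcl (fst p)"
  define D where "D = Sigma Q (\<lambda>q. Sigma {..length w} (\<lambda>i. PR {False} q1 q (take i w) \<times> PR UNIV q q2 (drop i w)))"
  define h where "h = (\<lambda>(q::nat, i::nat, x::'d tok list \<times> 'd atext, y::'d tok list \<times> 'd atext). (fst x @ fst y, opq q (snd x) (snd y)))"
  have finD: "finite D" unfolding D_def using finQ finite_PR by (intro finite_SigmaI) auto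
  have "(\<Sum>q\<in>Q. \<Sum>i\<le>length w. SS {False} q1 q (take i w) * SS UNIV q q2 (drop i w))
      = (\<Sum>q\<in>Q. \<Sum>i\<le>length w. \<Sum>xy\<in>PR {False} q1 q (take i w) \<times> PR UNIV q q2 (drop i w). ?f (fst xy) * ?f (snd xy))"
    unfolding SS_def by (simp add: sum_product sum.cartesian_product split_def)
  also have "\<dots> = (\<Sum>d\<in>D. (\<lambda>(q, i, x, y). ?f x * ?f y) d)"
    unfolding D_def using finQ finite_PR
    by (simp add: sum.Sigma finite_SigmaI split_def)
  also have "\<dots> = (\<Sum>d\<in>D. ?f (h d))"
    by (rule sum.cong) (auto simp: h_def run_weight_append)
  also have "\<dots> = (\<Sum>p\<in>h ` D. ?f p)"
  proof -
    have inj: "inj_on h D"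
    proof
      fix d d' assume dD: "d \<in> D" "d' \<in> D" and hd: "h d = h d'"
      obtain q i r1 t1 r2 t2 where d: "d = (q, i, (r1,t1), (r2,t2))" by (metis prod.exhaust)
      obtain q' i' r1' t1' r2' t2' where d': "d' = (q', i', (r1',t1'), (r2',t2'))" by (metis prod.exhaust)
      from dD d d' obtain b2 b2' where
        R1: "is_run H V Om r1 q1 q t1 False" "fst t1 = take i w" "i \<le> length w" and
        R2: "is_run H V Om r2 q q2 t2 b2" and
        R1': "is_run H V Om r1' q1 q' t1' False" "fst t1' = take i' w" "i' \<le> length w" and
        R2': "is_run H V Om r2' q' q2 t2' b2'"
        unfolding D_def PR_def by auto
      from hd d d' have e1: "r1 @ r2 = r1' @ r2'" and e2: "opq q t1 t2 = opq q' t1' t2'"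
        by (auto simp: h_def)
      have r1: "r1 = r1'" using run_prefix_uniq[OF e1 R1(1) R1'(1)] .
      then have r2: "r2 = r2'" using e1 by simp
      have qq: "q = q'" using run_basic[OF R1(1) disj] run_basic[OF R1'(1) disj] r1 by simp
      have l1: "length (fst t1) = length (fst t1')" using run_basic[OF R1(1) disj] run_basic[OF R1'(1) disj] r1 by simp
      have g: "good t1" "good t1'" "good t2" "good t2'"
        using run_basic[OF R1(1) disj] run_basic[OF R1'(1) disj] run_basic[OF R2 disj] run_basic[OF R2' disj] by auto
      have tt: "t1 = t1' \<and> t2 = t2'"
      proof (cases "q \<in> H")
        case True
        then have "tcomp t1 t2 = tcomp t1' t2'" using e2 qq by (simp add: opq_def)
        then show ?thesis using tcomp_inj[OF _ l1] g unfolding good_def by blast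
      next
        case False
        then have "tbullet t1 t2 = tbullet t1' t2'" using e2 qq by (simp add: opq_def)
        then show ?thesis using tbullet_inj[OF _ l1] g unfolding good_def by blast
      qed
      have "length (take i w) = length (take i' w)" using tt R1 R1' by simp
      then have "i = i'" using R1(3) R1'(3) by simp
      then show "d = d'" using d d' r1 r2 qq tt by simp
    qed
    show ?thesis using sum.reindex[OF inj, of ?f] by (simp add: o_def)
  qed
  also have "h ` D = PR {True} q1 q2 w"
  proof
    show "h ` D \<subseteq> PR {True} q1 q2 w"
    proof
      fix p assume "p \<in> h ` D"
      then obtain d where pd0: "p = h d" "d \<in> D" by blast
      obtain q i r1 t1 r2 t2 where dd: "d = (q, i, (r1,t1), (r2,t2))" by (metis prod.exhaust)
      have pd: "p = h (q, i, (r1,t1), (r2,t2))" "(q, i, (r1,t1), (r2,t2)) \<in> D" using pd0 dd by auto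
      from pd(2) have m: "q \<in> Q" "i \<le> length w" "(r1,t1) \<in> PR {False} q1 q (take i w)"
         "(r2,t2) \<in> PR UNIV q q2 (drop i w)" unfolding D_def by auto
      from m(4) obtain b2 where R2: "is_run H V Om r2 q q2 t2 b2" "fst t2 = drop i w"
        unfolding PR_mem by blast
      from m(1-3) have
        R1: "is_run H V Om r1 q1 q t1 False" "fst t1 = take i w" "i \<le> length w" "q \<in> Q"
        unfolding PR_mem by auto
      have "is_run H V Om (r1 @ r2) q1 q2 (opq q t1 t2) True"
      proof (cases "q \<in> H")
        case True then show ?thesis using is_run.concH[OF R1(1) R2(1)] by (simp add: opq_def)
      next
        case False then have "q \<in> V" using R1(4) by simp
        then show ?thesis using False is_run.concV[OF R1(1) R2(1)] by (simp add: opq_def)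
      qed
      moreover have "fst (opq q t1 t2) = w" using R1 R2 by (cases "q \<in> H") (simp_all add: opq_def tcomp_def tbullet_def)
      moreover have "p = (r1 @ r2, opq q t1 t2)" using pd(1) by (simp add: h_def)
      ultimately show "p \<in> PR {True} q1 q2 w" by (simp add: PR_mem)
    qed
  next
    show "PR {True} q1 q2 w \<subseteq> h ` D"
    proof
      fix p assume "p \<in> PR {True} q1 q2 w"
      then obtain r t where p: "p = (r,t)" "is_run H V Om r q1 q2 t True" "fst t = w"
        unfolding PR_def by auto
      from run_True_decomp[OF p(2) _ disj] obtain q r1 t1 r2 t2 b2 where
        dc: "r = r1 @ r2" "is_run H V Om r1 q1 q t1 False" "is_run H V Om r2 q q2 t2 b2"
           "q \<in> H \<and> t = tcomp t1 t2 \<or> q \<in> V \<and> t = tbullet t1 t2" by blast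
      have tq: "t = opq q t1 t2"
      proof (cases "q \<in> H")
        case True then have "q \<notin> V" using disj by blast
        then show ?thesis using dc(4) True by (simp add: opq_def)
      next
        case False then show ?thesis using dc(4) by (simp add: opq_def)
      qed
      have "fst (opq q t1 t2) = fst t1 @ fst t2" by (cases "q \<in> H") (simp_all add: opq_def tcomp_def tbullet_def)
      then have fw: "fst t1 @ fst t2 = w" using tq p(3) by simp
      define i where "i = length (fst t1)"
      have "take i w = fst t1" "drop i w = fst t2" "i \<le> length w" using fw i_def by auto
      moreover have "q \<in> Q" using dc(4) by auto
      moreover have "(r1,t1) \<in> PR {False} q1 q (take i w)" using dc(2) calculation(1)[symmetric] unfolding PR_mem by blast
      moreover have "(r2,t2) \<in> PR UNIV q q2 (drop i w)" using dc(3) calculation(2)[symmetric] unfolding PR_mem by blast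
      ultimately have "(q, i, (r1,t1), (r2,t2)) \<in> D" unfolding D_def by simp
      moreover have "p = h (q, i, (r1,t1), (r2,t2))" using p dc tq by (simp add: h_def)
      ultimately show "p \<in> h ` D" by blast
    qed
  qed
  finally show ?thesis unfolding SS_def by simp
qed

end



context wpa begin

definition acond :: "nat \<Rightarrow> nat \<Rightarrow> bool" where
  "acond q1 q2 \<longleftrightarrow> (q1 \<in> H \<and> q2 \<in> H) \<or> (q1 \<in> V \<and> q2 \<in> V)"
definition pcond :: "nat \<Rightarrow> nat \<Rightarrow> nat \<Rightarrow> bool" where
  "pcond q1 p1 q2 \<longleftrightarrow> (p1 \<in> H \<and> q1 \<in> V \<and> q2 \<in> V) \<or> (p1 \<in> V \<and> q1 \<in> H \<and> q2 \<in> H)"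

lemma E_U: "SS {False} q1 q2 w =
   (\<Sum>a\<in>UNIV. (if acond q1 q2 then mu q1 a q2 else 0) * (if w = [a] then 1 else 0)) +
   (\<Sum>s\<in>Om. \<Sum>p1\<in>{p1\<in>Q. pcond q1 p1 q2}. \<Sum>p2\<in>Q. mop q1 s p1 * mcl p2 s q2 * SS {True} p1 p2 w)"
proof -
  let ?f = "\<lambda>p. run_weight mu mop mcl (fst p)"
  define A where "A = {a. acond q1 q2 \<and> w = [a]}"
  define hA where "hA = (\<lambda>a::'d. ([Atom q1 a q2], singleton_text a))"
  define DB where "DB = Sigma Om (\<lambda>s. Sigma {p1\<in>Q. pcond q1 p1 q2} (\<lambda>p1. Sigma Q (\<lambda>p2. PR {True} p1 p2 w)))"
  define hB where "hB = (\<lambda>(s::nat, p1::nat, p2::nat, (m::'d tok list, t::'d atext)). ([Opn q1 s p1] @ m @ [Cls p2 s q2], t))"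
  have finDB: "finite DB" unfolding DB_def using finQ finOm finite_PR by (intro finite_SigmaI) auto
  have split: "PR {False} q1 q2 w = hA ` A \<union> hB ` DB"
  proof
    show "PR {False} q1 q2 w \<subseteq> hA ` A \<union> hB ` DB"
    proof
      fix p assume "p \<in> PR {False} q1 q2 w"
      then obtain r t where p: "p = (r,t)" "is_run H V Om r q1 q2 t False" "fst t = w"
        unfolding PR_def by auto
      from run_False_cases[OF p(2)] show "p \<in> hA ` A \<union> hB ` DB"
      proof
        assume "\<exists>a. r = [Atom q1 a q2] \<and> t = singleton_text a \<and> ((q1 \<in> H \<and> q2 \<in> H) \<or> (q1 \<in> V \<and> q2 \<in> V))"
        then obtain a where a: "r = [Atom q1 a q2]" "t = singleton_text a" "acond q1 q2"
          unfolding acond_def by blast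
        then have "a \<in> A" using p(3) by (simp add: A_def singleton_text_def)
        moreover have "p = hA a" using p a by (simp add: hA_def)
        ultimately show ?thesis by blast
      next
        assume "\<exists>s p1 p2 m. r = [Opn q1 s p1] @ m @ [Cls p2 s q2] \<and> is_run H V Om m p1 p2 t True \<and> s \<in> Om \<and>
        ((p1 \<in> H \<and> q1 \<in> V \<and> q2 \<in> V) \<or> (p1 \<in> V \<and> q1 \<in> H \<and> q2 \<in> H))"
        then obtain s p1 p2 m where b: "r = [Opn q1 s p1] @ m @ [Cls p2 s q2]" "is_run H V Om m p1 p2 t True"
          "s \<in> Om" "pcond q1 p1 q2"
          unfolding pcond_def by blast
        have "p1 \<in> Q" "p2 \<in> Q" using run_basic[OF b(2) disj] by auto
        moreover have "(m,t) \<in> PR {True} p1 p2 w" using b(2) p(3) unfolding PR_mem by blast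
        ultimately have "(s, p1, p2, (m, t)) \<in> DB" using b(3,4) unfolding DB_def by simp
        moreover have "p = hB (s, p1, p2, (m, t))" using p b by (simp add: hB_def)
        ultimately show ?thesis by blast
      qed
    qed
  next
    show "hA ` A \<union> hB ` DB \<subseteq> PR {False} q1 q2 w"
    proof
      fix p assume "p \<in> hA ` A \<union> hB ` DB"
      then show "p \<in> PR {False} q1 q2 w"
      proof
        assume "p \<in> hA ` A"
        then obtain a where a: "a \<in> A" "p = hA a" by blast
        then have "is_run H V Om [Atom q1 a q2] q1 q2 (singleton_text a) False"
          by (intro is_run.atom) (simp add: A_def acond_def)
        moreover have "fst (singleton_text a) = w" using a by (simp add: A_def singleton_text_def)
        ultimately have "([Atom q1 a q2], singleton_text a) \<in> PR {False} q1 q2 w" unfolding PR_mem by blast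
        then show ?thesis using a(2) by (simp add: hA_def)
      next
        assume "p \<in> hB ` DB"
        then obtain d where d0: "d \<in> DB" "p = hB d" by blast
        obtain s p1 p2 m t where dd: "d = (s, p1, p2, (m, t))" by (metis prod.exhaust)
        from d0 dd have m: "s \<in> Om" "p1 \<in> Q" "pcond q1 p1 q2" "(m,t) \<in> PR {True} p1 p2 w"
          unfolding DB_def by auto
        then have R: "is_run H V Om m p1 p2 t True" "fst t = w" unfolding PR_mem by auto
        have "is_run H V Om ([Opn q1 s p1] @ m @ [Cls p2 s q2]) q1 q2 t False"
          using is_run.paren[OF R(1) m(1)] m(3) unfolding pcond_def by blast
        then have "([Opn q1 s p1] @ m @ [Cls p2 s q2], t) \<in> PR {False} q1 q2 w" using R(2) unfolding PR_mem by blast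
        moreover have "p = ([Opn q1 s p1] @ m @ [Cls p2 s q2], t)" using d0 dd by (simp add: hB_def)
        ultimately show ?thesis by simp
      qed
    qed
  qed
  have disjAB: "hA ` A \<inter> hB ` DB = {}" by (auto simp: hA_def hB_def split: prod.splits)
  have finA: "finite A" by simp
  have injA: "inj_on hA A" by (auto simp: inj_on_def hA_def)
  have injB: "inj_on hB DB"
  proof
    fix d d' assume "d \<in> DB" "d' \<in> DB" "hB d = hB d'"
    obtain s p1 p2 m t where dd: "d = (s, p1, p2, (m, t))" by (metis prod.exhaust)
    obtain s' p1' p2' m' t' where dd': "d' = (s', p1', p2', (m', t'))" by (metis prod.exhaust)
    from \<open>hB d = hB d'\<close> dd dd' have e: "Opn q1 s p1 # m @ [Cls p2 s q2] = Opn q1 s' p1' # m' @ [Cls p2' s' q2]" "t = t'"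
      by (auto simp: hB_def)
    then have "s = s'" "p1 = p1'" "m @ [Cls p2 s q2] = m' @ [Cls p2' s' q2]" by auto
    then have "m = m'" "p2 = p2'" by auto
    then show "d = d'" using dd dd' e \<open>s = s'\<close> \<open>p1 = p1'\<close> by simp
  qed
  have "SS {False} q1 q2 w = (\<Sum>p\<in>hA ` A. ?f p) + (\<Sum>p\<in>hB ` DB. ?f p)"
    unfolding SS_def split using finA finDB disjAB by (simp add: sum.union_disjoint)
  also have "(\<Sum>p\<in>hA ` A. ?f p) = (\<Sum>a\<in>A. mu q1 a q2)"
    using sum.reindex[OF injA, of ?f] by (simp add: hA_def run_weight_def)
  also have "\<dots> = (\<Sum>a\<in>UNIV. (if acond q1 q2 then mu q1 a q2 else 0) * (if w = [a] then 1 else 0))"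
  proof -
    have "(\<Sum>a\<in>A. mu q1 a q2) = (\<Sum>a\<in>UNIV. if acond q1 q2 \<and> w = [a] then mu q1 a q2 else 0)"
      unfolding A_def using sum.inter_filter[of UNIV "\<lambda>a. mu q1 a q2" "\<lambda>a. acond q1 q2 \<and> w = [a]"] by simp
    also have "\<dots> = (\<Sum>a\<in>UNIV. (if acond q1 q2 then mu q1 a q2 else 0) * (if w = [a] then 1 else 0))"
      by (rule sum.cong) auto
    finally show ?thesis .
  qed
  also have "(\<Sum>p\<in>hB ` DB. ?f p) = (\<Sum>d\<in>DB. ?f (hB d))"
    using sum.reindex[OF injB, of ?f] by (simp add: o_def)
  also have "\<dots> = (\<Sum>d\<in>DB. (\<lambda>(s, p1, p2, x). mop q1 s p1 * mcl p2 s q2 * ?f x) d)"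
    by (rule sum.cong) (auto simp: hB_def run_weight_def mult_ac)
  also have "\<dots> = (\<Sum>s\<in>Om. \<Sum>p1\<in>{p1\<in>Q. pcond q1 p1 q2}. \<Sum>p2\<in>Q. \<Sum>x\<in>PR {True} p1 p2 w. mop q1 s p1 * mcl p2 s q2 * ?f x)"
    unfolding DB_def using finQ finOm finite_PR by (simp add: sum.Sigma finite_SigmaI split_def)
  also have "\<dots> = (\<Sum>s\<in>Om. \<Sum>p1\<in>{p1\<in>Q. pcond q1 p1 q2}. \<Sum>p2\<in>Q. mop q1 s p1 * mcl p2 s q2 * SS {True} p1 p2 w)"
    unfolding SS_def by (simp add: sum_distrib_left)
  finally show ?thesis .
qed

end



lemma cauchy_unit: "cauchy F (char_ser []) = F"
proof
  fix w :: "'a list"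
  have "(\<Sum>i\<le>length w. F (take i w) * char_ser [] (drop i w)) = (\<Sum>i\<in>{length w}. F (take i w) * char_ser [] (drop i w))"
    by (rule sum.mono_neutral_right) (auto simp: char_ser_def)
  then show "cauchy F (char_ser []) w = F w" by (simp add: cauchy_def char_ser_def)
qed

lemma char_ser_single: "char_ser [a] w = (if w = [a] then 1 else 0)" by (simp add: char_ser_def)

context wpa begin

lemma proj_link:
  fixes S :: "'d atext \<Rightarrow> 'k" and lam gam :: "nat \<Rightarrow> 'k"
  assumes "\<forall>t\<in>TXT. S t = wpa_behaviour H V Om mu mop mcl lam gam t"
  shows "proj S w = (\<Sum>q1\<in>Q. \<Sum>q2\<in>Q. lam q1 * gam q2 * SS UNIV q1 q2 w)"
proof -
  define T where "T = {t::'d atext. t \<in> TXT \<and> fst t = w}"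
  define R where "R = (\<lambda>q1 q2 (t::'d atext). {r. \<exists>b. is_run H V Om r q1 q2 t b})"
  have finT: "finite T"
  proof -
    have "T \<subseteq> {w} \<times> {p. set p \<subseteq> {0..<length w} \<and> length p \<le> length w}"
      using TXT_good unfolding T_def good_def by fastforce
    moreover have "finite ({w} \<times> {p. set p \<subseteq> {0..<length w} \<and> length p \<le> length w})"
      by (intro finite_cartesian_product finite_lists_length_le) auto
    ultimately show ?thesis by (rule finite_subset)
  qed
  have finR: "finite (R q1 q2 t)" for q1 q2 and t :: "'d atext"
  proof -
    have "R q1 q2 t \<subseteq> fst ` PR UNIV q1 q2 (fst t)"
      unfolding R_def PR_def by (auto intro: image_eqI[of _ fst "(r,t)" for r])
    then show ?thesis using finite_PR finite_subset by blast
  qed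
  have inner: "(\<Sum>t\<in>T. \<Sum>r\<in>R q1 q2 t. run_weight mu mop mcl r) = SS UNIV q1 q2 w" for q1 q2
  proof -
    have "(\<Sum>t\<in>T. \<Sum>r\<in>R q1 q2 t. run_weight mu mop mcl r) = (\<Sum>x\<in>Sigma T (R q1 q2). run_weight mu mop mcl (snd x))"
      using finT finR by (simp add: sum.Sigma split_def)
    also have "Sigma T (R q1 q2) = prod.swap ` PR UNIV q1 q2 w"
    proof
      show "Sigma T (R q1 q2) \<subseteq> prod.swap ` PR UNIV q1 q2 w"
      proof
        fix x assume "x \<in> Sigma T (R q1 q2)"
        then obtain t r b where x: "x = (t,r)" "fst t = w" "is_run H V Om r q1 q2 t b"
          unfolding T_def R_def by auto
        then have "(r,t) \<in> PR UNIV q1 q2 w" unfolding PR_mem by blast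
        then show "x \<in> prod.swap ` PR UNIV q1 q2 w" using x(1) by (auto intro: image_eqI[of _ _ "(r,t)"])
      qed
    next
      show "prod.swap ` PR UNIV q1 q2 w \<subseteq> Sigma T (R q1 q2)"
      proof
        fix x assume "x \<in> prod.swap ` PR UNIV q1 q2 w"
        then obtain r t where x: "x = (t,r)" "(r,t) \<in> PR UNIV q1 q2 w" by auto
        then obtain b where "is_run H V Om r q1 q2 t b" "fst t = w" unfolding PR_mem by blast
        moreover have "t \<in> TXT" using run_basic[OF calculation(1) disj] by simp
        ultimately show "x \<in> Sigma T (R q1 q2)" using x(1) unfolding T_def R_def by auto
      qed
    qed
    also have "(\<Sum>x\<in>prod.swap ` PR UNIV q1 q2 w. run_weight mu mop mcl (snd x)) = SS UNIV q1 q2 w"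
      unfolding SS_def by (subst sum.reindex) (auto simp: o_def)
    finally show ?thesis .
  qed
  have "proj S w = (\<Sum>t\<in>T. S t)" unfolding proj_def T_def by simp
  also have "\<dots> = (\<Sum>t\<in>T. \<Sum>q1\<in>Q. \<Sum>q2\<in>Q. lam q1 * gam q2 * (\<Sum>r\<in>R q1 q2 t. run_weight mu mop mcl r))"
    by (rule sum.cong) (auto simp: T_def R_def assms wpa_behaviour_def mult_ac)
  also have "\<dots> = (\<Sum>q1\<in>Q. \<Sum>q2\<in>Q. \<Sum>t\<in>T. lam q1 * gam q2 * (\<Sum>r\<in>R q1 q2 t. run_weight mu mop mcl r))"
    by (simp add: sum.swap[of _ T])
  also have "\<dots> = (\<Sum>q1\<in>Q. \<Sum>q2\<in>Q. lam q1 * gam q2 * SS UNIV q1 q2 w)"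
    by (simp add: sum_distrib_left[symmetric] inner)
  finally show ?thesis .
qed

end



definition dl :: "('d + nat) list \<Rightarrow> 'k::zero \<Rightarrow> ('d + nat) list \<Rightarrow> 'k" where
  "dl m0 c m = (if m = m0 then c else 0)"

definition eU :: "nat \<Rightarrow> nat \<Rightarrow> nat" where "eU q1 q2 = Suc (prod_encode (0, prod_encode (q1, q2)))"
definition eC :: "nat \<Rightarrow> nat \<Rightarrow> nat" where "eC q1 q2 = Suc (prod_encode (1, prod_encode (q1, q2)))"

lemma eU_neq0[simp]: "eU q1 q2 \<noteq> 0" and eC_neq0[simp]: "eC q1 q2 \<noteq> 0"
  by (simp_all add: eU_def eC_def)

context wpa begin

definition Xs :: "nat set" where
  "Xs = insert 0 ((\<lambda>(q1,q2). eU q1 q2) ` (Q \<times> Q) \<union> (\<lambda>(q1,q2). eC q1 q2) ` (Q \<times> Q))"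

definition Ser0 :: "(nat \<Rightarrow> 'k) \<Rightarrow> (nat \<Rightarrow> 'k) \<Rightarrow> ('d, 'k) fpser" where
  "Ser0 lam gam w = (\<Sum>q1\<in>Q. \<Sum>q2\<in>Q. lam q1 * gam q2 * SS UNIV q1 q2 w)"

definition Sol :: "(nat \<Rightarrow> 'k) \<Rightarrow> (nat \<Rightarrow> 'k) \<Rightarrow> nat \<Rightarrow> ('d, 'k) fpser" where
  "Sol lam gam X = (if X = 0 then Ser0 lam gam else
     (case prod_decode (X - 1) of (k, c) \<Rightarrow> case prod_decode c of (q1, q2) \<Rightarrow>
        if k = 0 then SS {False} q1 q2 else SS {True} q1 q2))"

lemma Sol_0: "Sol lam gam 0 = Ser0 lam gam" by (simp add: Sol_def)
lemma Sol_U: "Sol lam gam (eU q1 q2) = SS {False} q1 q2" by (simp add: Sol_def eU_def)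
lemma Sol_C: "Sol lam gam (eC q1 q2) = SS {True} q1 q2" by (simp add: Sol_def eC_def)

definition PC :: "nat \<Rightarrow> nat \<Rightarrow> ('d + nat) list \<Rightarrow> 'k" where
  "PC q1 q2 m = (\<Sum>q\<in>Q. dl [Inr (eU q1 q), Inr (eU q q2)] 1 m + dl [Inr (eU q1 q), Inr (eC q q2)] 1 m)"

definition PU :: "nat \<Rightarrow> nat \<Rightarrow> ('d + nat) list \<Rightarrow> 'k" where
  "PU q1 q2 m = (\<Sum>a\<in>UNIV. dl [Inl a] (if acond q1 q2 then mu q1 a q2 else 0) m) +
     (\<Sum>s\<in>Om. \<Sum>p1\<in>{p1\<in>Q. pcond q1 p1 q2}. \<Sum>p2\<in>Q. mop q1 s p1 * mcl p2 s q2 * PC p1 p2 m)"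

definition P0 :: "(nat \<Rightarrow> 'k) \<Rightarrow> (nat \<Rightarrow> 'k) \<Rightarrow> ('d + nat) list \<Rightarrow> 'k" where
  "P0 lam gam m = (\<Sum>q1\<in>Q. \<Sum>q2\<in>Q. lam q1 * gam q2 * (PU q1 q2 m + PC q1 q2 m))"

definition Pol :: "(nat \<Rightarrow> 'k) \<Rightarrow> (nat \<Rightarrow> 'k) \<Rightarrow> nat \<Rightarrow> ('d + nat) list \<Rightarrow> 'k" where
  "Pol lam gam X = (if X = 0 then P0 lam gam else
     (case prod_decode (X - 1) of (k, c) \<Rightarrow> case prod_decode c of (q1, q2) \<Rightarrow>
        if k = 0 then PU q1 q2 else PC q1 q2))"

lemma Pol_0: "Pol lam gam 0 = P0 lam gam" by (simp add: Pol_def)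
lemma Pol_U: "Pol lam gam (eU q1 q2) = PU q1 q2" by (simp add: Pol_def eU_def)
lemma Pol_C: "Pol lam gam (eC q1 q2) = PC q1 q2" by (simp add: Pol_def eC_def)

definition Mon :: "('d + nat) list set" where
  "Mon = {m. set m \<subseteq> range Inl \<union> Inr ` Xs \<and> length m \<le> 2}"

lemma finXs: "finite Xs" unfolding Xs_def using finQ by simp

lemma finMon: "finite Mon"
  unfolding Mon_def by (intro finite_lists_length_le) (use finXs in auto)

lemma monU: "q1 \<in> Q \<Longrightarrow> q2 \<in> Q \<Longrightarrow> eU q1 q2 \<in> Xs" unfolding Xs_def by auto
lemma monC: "q1 \<in> Q \<Longrightarrow> q2 \<in> Q \<Longrightarrow> eC q1 q2 \<in> Xs" unfolding Xs_def by auto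

lemma PC_out: "q1 \<in> Q \<Longrightarrow> q2 \<in> Q \<Longrightarrow> m \<notin> Mon \<Longrightarrow> PC q1 q2 m = 0"
  unfolding PC_def dl_def Mon_def by (intro sum.neutral) (auto simp: monU monC)

lemma PU_out: "q1 \<in> Q \<Longrightarrow> q2 \<in> Q \<Longrightarrow> m \<notin> Mon \<Longrightarrow> PU q1 q2 m = 0"
proof -
  assume a: "q1 \<in> Q" "q2 \<in> Q" "m \<notin> Mon"
  have "(\<Sum>a\<in>UNIV. dl [Inl a] (if acond q1 q2 then mu q1 a q2 else 0) m) = 0"
    using a(3) unfolding dl_def Mon_def by (intro sum.neutral) auto
  moreover have "(\<Sum>s\<in>Om. \<Sum>p1\<in>{p1\<in>Q. pcond q1 p1 q2}. \<Sum>p2\<in>Q. mop q1 s p1 * mcl p2 s q2 * PC p1 p2 m) = 0"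
    using a(3) PC_out by (intro sum.neutral) auto
  ultimately show ?thesis unfolding PU_def by simp
qed

lemma Pol_out: "X \<in> Xs \<Longrightarrow> m \<notin> Mon \<Longrightarrow> Pol lam gam X m = 0"
  unfolding Xs_def
  by (auto simp: Pol_0 Pol_U Pol_C P0_def PU_out PC_out intro!: sum.neutral)

end



context wpa begin

definition Ev :: "(nat \<Rightarrow> 'k) \<Rightarrow> (nat \<Rightarrow> 'k) \<Rightarrow> 'd list \<Rightarrow> (('d + nat) list \<Rightarrow> 'k) \<Rightarrow> 'k" where
  "Ev lam gam w P = (\<Sum>m\<in>Mon. P m * subst_word (Sol lam gam) m w)"

lemma Ev_add: "Ev lam gam w (\<lambda>m. f m + g m) = Ev lam gam w f + Ev lam gam w g"
  by (simp add: Ev_def distrib_right sum.distrib)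

lemma Ev_mult: "Ev lam gam w (\<lambda>m. c * f m) = c * Ev lam gam w f"
  by (simp add: Ev_def sum_distrib_left mult.assoc)

lemma Ev_sum: "Ev lam gam w (\<lambda>m. \<Sum>j\<in>J. f j m) = (\<Sum>j\<in>J. Ev lam gam w (f j))"
  unfolding Ev_def by (simp add: sum_distrib_right sum.swap[of _ Mon])

lemma Ev_dl: "m0 \<in> Mon \<Longrightarrow> Ev lam gam w (dl m0 c) = c * subst_word (Sol lam gam) m0 w"
proof -
  assume "m0 \<in> Mon"
  then have "(\<Sum>m\<in>Mon. dl m0 c m * subst_word (Sol lam gam) m w) = (\<Sum>m\<in>{m0}. dl m0 c m * subst_word (Sol lam gam) m w)"
    by (intro sum.mono_neutral_right finMon) (auto simp: dl_def)
  then show ?thesis by (simp add: Ev_def dl_def)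
qed

lemma subst2: "subst_word F [Inr X, Inr Y] = cauchy (F X) (F Y)"
  by (simp add: cauchy_unit)

lemma subst1: "subst_word F [Inl a] w = (if w = [a] then 1 else 0)"
  by (simp add: cauchy_unit char_ser_single)

lemma cauchy_add: "cauchy F G w + cauchy F G' w = cauchy F (\<lambda>u. G u + G' u) w"
  by (simp add: cauchy_def distrib_left sum.distrib)

lemma Ev_PC: "q1 \<in> Q \<Longrightarrow> q2 \<in> Q \<Longrightarrow> Ev lam gam w (PC q1 q2) = SS {True} q1 q2 w"
proof -
  assume q: "q1 \<in> Q" "q2 \<in> Q"
  have PCe: "PC q1 q2 = (\<lambda>m. \<Sum>q\<in>Q. dl [Inr (eU q1 q), Inr (eU q q2)] 1 m + dl [Inr (eU q1 q), Inr (eC q q2)] 1 m)"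
    by (simp add: PC_def fun_eq_iff)
  have mon: "[Inr (eU q1 q), Inr (eU q q2)] \<in> Mon" "[Inr (eU q1 q), Inr (eC q q2)] \<in> Mon" if "q \<in> Q" for q
    using that q monU monC unfolding Mon_def by auto
  have "Ev lam gam w (PC q1 q2) = (\<Sum>q\<in>Q. Ev lam gam w (dl [Inr (eU q1 q), Inr (eU q q2)] 1) + Ev lam gam w (dl [Inr (eU q1 q), Inr (eC q q2)] 1))"
    unfolding PCe Ev_sum Ev_add ..
  also have "\<dots> = (\<Sum>q\<in>Q. cauchy (SS {False} q1 q) (SS {False} q q2) w + cauchy (SS {False} q1 q) (SS {True} q q2) w)"
    by (rule sum.cong) (simp_all add: Ev_dl mon cauchy_unit Sol_U Sol_C)
  also have "\<dots> = (\<Sum>q\<in>Q. \<Sum>i\<le>length w. SS {False} q1 q (take i w) * SS UNIV q q2 (drop i w))"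
    by (simp add: cauchy_def SS_union[symmetric] distrib_left sum.distrib)
  also have "\<dots> = SS {True} q1 q2 w" by (simp add: E_C)
  finally show ?thesis .
qed

lemma Ev_PU: "q1 \<in> Q \<Longrightarrow> q2 \<in> Q \<Longrightarrow> Ev lam gam w (PU q1 q2) = SS {False} q1 q2 w"
proof -
  assume q: "q1 \<in> Q" "q2 \<in> Q"
  have PUe: "PU q1 q2 = (\<lambda>m. (\<Sum>a\<in>UNIV. dl [Inl a] (if acond q1 q2 then mu q1 a q2 else 0) m) +
     (\<Sum>s\<in>Om. \<Sum>p1\<in>{p1\<in>Q. pcond q1 p1 q2}. \<Sum>p2\<in>Q. mop q1 s p1 * mcl p2 s q2 * PC p1 p2 m))"
    by (simp add: PU_def fun_eq_iff)
  have mon: "[Inl a] \<in> Mon" for a unfolding Mon_def by auto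
  have "Ev lam gam w (PU q1 q2) = (\<Sum>a\<in>UNIV. Ev lam gam w (dl [Inl a] (if acond q1 q2 then mu q1 a q2 else 0))) +
     (\<Sum>s\<in>Om. \<Sum>p1\<in>{p1\<in>Q. pcond q1 p1 q2}. \<Sum>p2\<in>Q. mop q1 s p1 * mcl p2 s q2 * Ev lam gam w (PC p1 p2))"
    unfolding PUe Ev_sum Ev_add Ev_mult ..
  also have "\<dots> = (\<Sum>a\<in>UNIV. (if acond q1 q2 then mu q1 a q2 else 0) * (if w = [a] then 1 else 0)) +
   (\<Sum>s\<in>Om. \<Sum>p1\<in>{p1\<in>Q. pcond q1 p1 q2}. \<Sum>p2\<in>Q. mop q1 s p1 * mcl p2 s q2 * SS {True} p1 p2 w)"
    by (simp add: Ev_dl mon cauchy_unit char_ser_single Ev_PC)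
  also have "\<dots> = SS {False} q1 q2 w" by (simp add: E_U)
  finally show ?thesis .
qed

end



context wpa begin

lemma supp_Mon: "X \<in> Xs \<Longrightarrow> poly_support (Pol lam gam X) \<subseteq> Mon"
  using Pol_out unfolding poly_support_def by blast

lemma eval_Ev: "X \<in> Xs \<Longrightarrow> (\<Sum>m\<in>poly_support (Pol lam gam X). Pol lam gam X m * subst_word (Sol lam gam) m w)
   = Ev lam gam w (Pol lam gam X)"
  unfolding Ev_def
  by (intro sum.mono_neutral_left finMon supp_Mon) (auto simp: poly_support_def)

lemma Ev_P0: "Ev lam gam w (P0 lam gam) = Ser0 lam gam w"
proof -
  have P0e: "P0 lam gam = (\<lambda>m. \<Sum>q1\<in>Q. \<Sum>q2\<in>Q. lam q1 * gam q2 * (PU q1 q2 m + PC q1 q2 m))"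
    by (simp add: P0_def fun_eq_iff)
  have "Ev lam gam w (P0 lam gam) = (\<Sum>q1\<in>Q. \<Sum>q2\<in>Q. lam q1 * gam q2 * (Ev lam gam w (PU q1 q2) + Ev lam gam w (PC q1 q2)))"
    unfolding P0e Ev_sum Ev_mult Ev_add ..
  also have "\<dots> = Ser0 lam gam w"
    unfolding Ser0_def by (intro sum.cong refl) (simp add: Ev_PU Ev_PC SS_union)
  finally show ?thesis .
qed

lemma Pol_proper: "X \<in> Xs \<Longrightarrow> Pol lam gam X [] = 0 \<and> Pol lam gam X [Inr Y] = 0"
  unfolding Xs_def
  by (auto simp: Pol_0 Pol_U Pol_C P0_def PU_def PC_def dl_def)

lemma main:
  fixes S :: "'d atext \<Rightarrow> 'k" and lam gam :: "nat \<Rightarrow> 'k"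
  assumes "\<forall>t\<in>TXT. S t = wpa_behaviour H V Om mu mop mcl lam gam t"
  shows "algebraic_series (proj S)"
  unfolding algebraic_series_def
proof (intro exI conjI)
  show "alg_system Xs (Pol lam gam)"
    unfolding alg_system_def
  proof (intro conjI ballI allI impI finXs)
    fix X assume X: "X \<in> Xs"
    show "finite (poly_support (Pol lam gam X))" using supp_Mon[OF X] finMon finite_subset by blast
    fix m Y assume "m \<in> poly_support (Pol lam gam X)" "Inr Y \<in> set m"
    then show "Y \<in> Xs" using supp_Mon[OF X] unfolding Mon_def by auto
  qed
  show "proper_system Xs (Pol lam gam)" unfolding proper_system_def using Pol_proper by blast
  show "is_solution Xs (Pol lam gam) (Sol lam gam)"
    unfolding is_solution_def
  proof (intro ballI allI)
    fix X w assume X: "X \<in> Xs"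
    show "Sol lam gam X w = (\<Sum>m\<in>poly_support (Pol lam gam X). Pol lam gam X m * subst_word (Sol lam gam) m w)"
      unfolding eval_Ev[OF X] using X unfolding Xs_def
      by (auto simp: Sol_0 Sol_U Sol_C Pol_0 Pol_U Pol_C Ev_P0 Ev_PU Ev_PC)
  qed
  show "\<forall>X\<in>Xs. quasiregular (Sol lam gam X)"
    unfolding Xs_def quasiregular_def by (auto simp: Sol_0 Sol_U Sol_C Ser0_def SS_nil)
  show "0 \<in> Xs" by (simp add: Xs_def)
  show "Sol lam gam 0 = proj S"
    by (simp add: Sol_0 fun_eq_iff Ser0_def proj_link[OF assms])
qed

end

theorem proposition6p11:
  fixes S :: "'d::finite atext \<Rightarrow> 'k::comm_semiring_1"
  assumes "(0::'k) \<noteq> 1"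
    and "regular_text_series S"
  shows "algebraic_series (proj S)"
proof -
  from assms(2) obtain H V Om and mu :: "nat \<Rightarrow> 'd \<Rightarrow> nat \<Rightarrow> 'k" and mop mcl lam gam where
    h: "finite H" "finite V" "H \<inter> V = {}" "finite Om"
       "\<forall>t\<in>TXT. S t = wpa_behaviour H V Om mu mop mcl lam gam t"
    unfolding regular_text_series_def by blast
  interpret wpa H V Om mu mop mcl using h by unfold_locales auto
  show ?thesis using main[OF h(5)] .
qed



end
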